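(* For all $\lambda$-terms $M,N$: if $M \twoheadrightarrow_\beta N$, then $\mathrm{BT}^c(M) \geq \mathrm{BT}^c(N)$, i.e. $N$ improves $M$ globally.
   Context: Untyped $\lambda$-calculus modulo $\alpha$; $\twoheadrightarrow_\beta$ is the reflexive-transitive closure of $\beta$-reduction. A head reduction step is a $\beta$-step of the form $\lambda x_1\ldots x_n.(\lambda y.M)NN_1\ldots N_m \to \lambda x_1\ldots x_n.M[y:=N]N_1\ldots N_m$ ($n,m\ge0$); a head normal form (hnf) is a term $\lambda x_1\ldots x_n.\,yN_1\ldots N_m$. The clocked Böhm tree $\mathrm{BT}^c(M)$ is the annotated, possibly infinite tree defined coinductively: if $M$ has no hnf then $\mathrm{BT}^c(M)=\bot$; otherwise the (unique) head reduction of $M$ to hnf has some length $k$, say $M \to_h^k \lambda x_1\ldots x_n.\,yM_1\ldots M_m$, and then $\mathrm{BT}^c(M)$ is the tree $\lambda x_1\ldots x_n.\,y\,\mathrm{BT}^c(M_1)\ldots\mathrm{BT}^c(M_m)$ whose root node carries the annotation $k$. Positions are finite sequences over $\{0,1,2\}$: the empty sequence is the root, $0p$ in $\lambda x.T$ is position $p$ of $T$, $1p$ (resp. $2p$) in an application $T_1T_2$ is position $p$ of $T_1$ (resp. $T_2$). For annotated trees $T_1,T_2$, write $T_1 \ge T_2$ if $T_1$ and $T_2$ are identical after erasing all annotations, and for every position $p$ either neither subtree at $p$ carries a root annotation, or both do, with annotations $k_1,k_2$ satisfying $k_1 \ge k_2$. $N$ improves $M$ globally if $\mathrm{BT}^c(N)\le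 \mathrm{BT}^c(M)$. *)

theory Defs
  imports Main
begin

datatype dB = is_Var: Var (var_of: nat) | is_App: App (fun_of: dB) (arg_of: dB) | is_Abs: Abs (body_of: dB)

primrec lift :: "dB \<Rightarrow> nat \<Rightarrow> dB" where
  "lift (Var i) k = (if i < k then Var i else Var (i + 1))"
| "lift (App s t) k = App (lift s k) (lift t k)"
| "lift (Abs s) k = Abs (lift s (k + 1))"

primrec subst :: "dB \<Rightarrow> dB \<Rightarrow> nat \<Rightarrow> dB" where
  "subst (Var i) s k = (if k < i then Var (i - 1) else if i = k then s else Var i)"
| "subst (App t u) s k = App (subst t s k) (subst u s k)"
| "subst (Abs t) s k = Abs (subst t (lift s 0) (k + 1))"

inductive beta :: "dB \<Rightarrow> dB \<Rightarrow> bool" where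
  beta_redex: "beta (App (Abs s) t) (subst s t 0)"
| beta_appL: "beta s t \<Longrightarrow> beta (App s u) (App t u)"
| beta_appR: "beta s t \<Longrightarrow> beta (App u s) (App u t)"
| beta_abs: "beta s t \<Longrightarrow> beta (Abs s) (Abs t)"

abbreviation beta_star :: "dB \<Rightarrow> dB \<Rightarrow> bool" where
  "beta_star \<equiv> beta\<^sup>*\<^sup>*"

inductive head :: "dB \<Rightarrow> dB \<Rightarrow> bool" where
  head_redex: "head (App (Abs s) t) (subst s t 0)"
| head_app: "head s s' \<Longrightarrow> (\<forall>u. s \<noteq> Abs u) \<Longrightarrow> head (App s t) (App s' t)"
| head_abs: "head s s' \<Longrightarrow> head (Abs s) (Abs s')"

fun is_var_app :: "dB \<Rightarrow> bool" where
  "is_var_app (Var y) = True"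
| "is_var_app (App s t) = is_var_app s"
| "is_var_app (Abs s) = False"

fun is_hnf :: "dB \<Rightarrow> bool" where
  "is_hnf (Abs s) = is_hnf s"
| "is_hnf t = is_var_app t"

definition has_hnf :: "dB \<Rightarrow> bool" where
  "has_hnf M \<longleftrightarrow> (\<exists>k N. (head ^^ k) M N \<and> is_hnf N)"

definition hlen :: "dB \<Rightarrow> nat" where
  "hlen M = (THE k. \<exists>N. (head ^^ k) M N \<and> is_hnf N)"

definition hnf :: "dB \<Rightarrow> dB" where
  "hnf M = (THE N. \<exists>k. (head ^^ k) M N \<and> is_hnf N)"

text \<open>Nodes mirror lambda-term syntax; every non-bottom node carries an
  annotation of type 'a (used with 'a = nat option: None = no annotation).\<close>
codatatype 'a atree =
    ABot
  | AVar 'a nat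
  | ALam 'a "'a atree"
  | AApp 'a "'a atree" "'a atree"

text \<open>The state (M, True) means: compute
  BT^c(M) afresh; (M, False) means: M is a part of the spine of an hnf already
  computed, to be copied (without annotation), its arguments being computed
  afresh.\<close>
primcorec bt_gen :: "dB \<times> bool \<Rightarrow> nat option atree" where
  "bt_gen x =
    (if snd x \<and> \<not> has_hnf (fst x) then ABot
     else if is_Var (if snd x then hnf (fst x) else fst x)
       then AVar (if snd x then Some (hlen (fst x)) else None)
                 (var_of (if snd x then hnf (fst x) else fst x))
     else if is_Abs (if snd x then hnf (fst x) else fst x)
       then ALam (if snd x then Some (hlen (fst x)) else None)
                 (bt_gen (body_of (if snd x then hnf (fst x) else fst x), False))
     else AApp (if snd x then Some (hlen (fst x)) else None)
               (bt_gen (fun_of (if snd x then hnf (fst x) else fst x), False))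
               (bt_gen (arg_of (if snd x then hnf (fst x) else fst x), True)))"

definition BTc :: "dB \<Rightarrow> nat option atree" where
  "BTc M = bt_gen (M, True)"

primrec subtree_at :: "'a atree \<Rightarrow> nat list \<Rightarrow> 'a atree option" where
  "subtree_at t [] = Some t"
| "subtree_at t (i # p) =
     (case t of
        ALam _ u \<Rightarrow> (if i = 0 then subtree_at u p else None)
      | AApp _ u v \<Rightarrow> (if i = 1 then subtree_at u p else if i = 2 then subtree_at v p else None)
      | _ \<Rightarrow> None)"

definition root_ann :: "nat option atree \<Rightarrow> nat option" where
  "root_ann t = (case t of ABot \<Rightarrow> None | AVar a _ \<Rightarrow> a | ALam a _ \<Rightarrow> a | AApp a _ _ \<Rightarrow> a)"

definition erase :: "nat option atree \<Rightarrow> nat option atree" where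
  "erase t = map_atree (\<lambda>_. None) t"

definition tree_ge :: "nat option atree \<Rightarrow> nat option atree \<Rightarrow> bool" where
  "tree_ge T1 T2 \<longleftrightarrow>
     erase T1 = erase T2 \<and>
     (\<forall>p s1 s2. subtree_at T1 p = Some s1 \<longrightarrow> subtree_at T2 p = Some s2 \<longrightarrow>
        (root_ann s1 = None \<and> root_ann s2 = None) \<or>
        (\<exists>k1 k2. root_ann s1 = Some k1 \<and> root_ann s2 = Some k2 \<and> k1 \<ge> k2))"

definition improves_globally :: "dB \<Rightarrow> dB \<Rightarrow> bool" where
  "improves_globally N M \<longleftrightarrow> tree_ge (BTc M) (BTc N)"

end

theory Submission
  imports Defs
begin

lemma lift_lift: "i < k + 1 \<Longrightarrow> lift (lift t i) (Suc k) = lift (lift t k) i"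
  by (induct t arbitrary: i k) auto

lemma lift_subst: "j < i + 1 \<Longrightarrow> lift (subst t s j) i = subst (lift t (i + 1)) (lift s i) j"
  by (induct t arbitrary: i j s) (simp_all add: diff_Suc split: nat.split, auto simp: lift_lift)

lemma lift_subst_lt: "i < j + 1 \<Longrightarrow> lift (subst t s j) i = subst (lift t i) (lift s i) (j + 1)"
  by (induct t arbitrary: i j s) (auto simp: lift_lift)

lemma subst_lift: "subst (lift t k) s k = t"
  by (induct t arbitrary: k s) auto

lemma subst_subst:
  "i < j + 1 \<Longrightarrow> subst (subst t (lift v i) (Suc j)) (subst u v j) i = subst (subst t u i) v j"
proof (induct t arbitrary: i j u v)
  case (Abs t)
  have "lift (lift v i) 0 = lift (lift v 0) (Suc i)" using lift_lift[of 0 i v] by simp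
  moreover have "subst (lift u 0) (lift v 0) (Suc j) = lift (subst u v j) 0"
    using lift_subst_lt[of 0 j u v] by simp
  moreover have "Suc i < Suc (Suc j)" using Abs by simp
  ultimately show ?case using Abs(1)[of "Suc i" "Suc j" "lift v 0" "lift u 0"] by simp
qed (simp_all add: diff_Suc subst_lift lift_subst lift_subst_lt split: nat.split)



primrec occ :: "nat \<Rightarrow> dB \<Rightarrow> nat" where
  "occ k (Var i) = (if i = k then 1 else 0)"
| "occ k (App s t) = occ k s + occ k t"
| "occ k (Abs s) = occ (Suc k) s"

lemma occ_lift_lt: "j < m \<Longrightarrow> occ j (lift t m) = occ j t"
  by (induct t arbitrary: j m) auto

lemma occ_lift_ge: "m \<le> j \<Longrightarrow> occ (Suc j) (lift t m) = occ j t"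
  by (induct t arbitrary: j m) auto

lemma occ_lift_eq: "occ m (lift t m) = 0"
  by (induct t arbitrary: m) auto

lemma occ_subst_low: "j \<le> k \<Longrightarrow> occ j w = 0 \<Longrightarrow> occ j (subst t w (Suc k)) = occ j t"
  by (induct t arbitrary: j k w) (auto simp: occ_lift_ge)

lemma occ_subst: "j \<le> k \<Longrightarrow> occ k (subst t x j) = occ (Suc k) t + occ j t * occ k x"
  by (induct t arbitrary: j k x) (auto simp: occ_lift_ge algebra_simps)

section \<open>Parallel reduction with size\<close>

inductive pari :: "dB \<Rightarrow> dB \<Rightarrow> nat \<Rightarrow> bool" where
  pv: "pari (Var i) (Var i) 0"
| pabs: "pari s t a \<Longrightarrow> pari (Abs s) (Abs t) (Suc a)"
| papp: "pari s t a \<Longrightarrow> pari u v b \<Longrightarrow> pari (App s u) (App t v) (a + b + 1)"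
| pbeta: "pari s t a \<Longrightarrow> pari u v b \<Longrightarrow> pari (App (Abs s) u) (subst t v 0) (a + occ 0 t * b + 1)"

definition par :: "dB \<Rightarrow> dB \<Rightarrow> bool" where
  "par s t \<longleftrightarrow> (\<exists>a. pari s t a)"

lemma papp_Suc: "pari s t a \<Longrightarrow> pari u v b \<Longrightarrow> pari (App s u) (App t v) (Suc (a + b))"
  using papp by simp

lemma pari_lift: "pari s t a \<Longrightarrow> pari (lift s k) (lift t k) a"
proof (induct arbitrary: k rule: pari.induct)
  case (pbeta s t a u v b)
  have "pari (App (Abs (lift s (Suc k))) (lift u k)) (subst (lift t (Suc k)) (lift v k) 0)
          (a + occ 0 (lift t (Suc k)) * b + 1)"
    using pari.pbeta[OF pbeta(2)[of "Suc k"] pbeta(4)[of k]] by simp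
  moreover have "occ 0 (lift t (Suc k)) = occ 0 t" by (simp add: occ_lift_lt)
  moreover have "lift (subst t v 0) k = subst (lift t (Suc k)) (lift v k) 0"
    using lift_subst[of 0 k t v] by simp
  ultimately show ?case by simp
qed (auto intro: pari.intros papp_Suc)

lemma pari_subst:
  "pari s t a \<Longrightarrow> pari u v b \<Longrightarrow> \<exists>c. pari (subst s u k) (subst t v k) c \<and> c \<le> a + occ k t * b"
proof (induct arbitrary: k u v b rule: pari.induct)
  case (pv i)
  then show ?case by (auto intro: pari.intros)
next
  case (pabs s t a)
  from pabs(2)[of "lift u 0" "lift v 0" b "Suc k"] pabs(3) obtain c where
    "pari (subst s (lift u 0) (Suc k)) (subst t (lift v 0) (Suc k)) c" "c \<le> a + occ (Suc k) t * b"
    by (auto intro: pari_lift)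
  then show ?case by (auto intro!: exI[of _ "Suc c"] intro: pari.intros)
next
  case (papp s t a w x b')
  from papp(2)[OF papp(5)] papp(4)[OF papp(5)] obtain c1 c2 where
    "pari (subst s u k) (subst t v k) c1" "c1 \<le> a + occ k t * b"
    "pari (subst w u k) (subst x v k) c2" "c2 \<le> b' + occ k x * b"
    by blast
  then show ?case by (auto intro!: exI[of _ "c1 + c2 + 1"] intro: pari.intros simp: algebra_simps)
next
  case (pbeta s t a w x b')
  from pbeta(2)[of "lift u 0" "lift v 0" b "Suc k"] pbeta(5) obtain c1 where
    c1: "pari (subst s (lift u 0) (Suc k)) (subst t (lift v 0) (Suc k)) c1" "c1 \<le> a + occ (Suc k) t * b"
    by (auto intro: pari_lift)
  from pbeta(4)[OF pbeta(5)] obtain c2 where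
    c2: "pari (subst w u k) (subst x v k) c2" "c2 \<le> b' + occ k x * b" by blast
  have o1: "occ 0 (subst t (lift v 0) (Suc k)) = occ 0 t"
    by (rule occ_subst_low) (auto simp: occ_lift_eq)
  have o2: "occ k (subst t x 0) = occ (Suc k) t + occ 0 t * occ k x" by (rule occ_subst) simp
  have eq: "subst (subst t x 0) v k = subst (subst t (lift v 0) (Suc k)) (subst x v k) 0"
    using subst_subst[of 0 k t v x] by simp
  have P: "pari (App (Abs (subst s (lift u 0) (Suc k))) (subst w u k))
             (subst (subst t (lift v 0) (Suc k)) (subst x v k) 0) (c1 + occ 0 t * c2 + 1)"
    using pari.pbeta[OF c1(1) c2(1)] o1 by simp
  have "occ 0 t * c2 \<le> occ 0 t * (b' + occ k x * b)" using c2(2) by simp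
  then have "c1 + occ 0 t * c2 + 1 \<le> (a + occ 0 t * b' + 1) + occ k (subst t x 0) * b"
    using c1(2) o2 by (simp add: algebra_simps)
  then show ?case using P eq by auto
qed

lemma par_subst: "par s t \<Longrightarrow> par u v \<Longrightarrow> par (subst s u k) (subst t v k)"
  unfolding par_def using pari_subst by blast

lemma par_refl: "par t t"
  unfolding par_def by (induct t) (auto intro: pari.intros)

lemma beta_par: "beta s t \<Longrightarrow> par s t"
proof (induct rule: beta.induct)
  case (beta_redex s t)
  then show ?case using par_refl unfolding par_def by (blast intro: pari.pbeta)
next
  case (beta_appL s t u)
  then show ?case using par_refl unfolding par_def by (blast intro: pari.papp)
next
  case (beta_appR s t u)
  then show ?case using par_refl unfolding par_def by (blast intro: pari.papp)
next
  case (beta_abs s t)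
  then show ?case unfolding par_def by (blast intro: pari.pabs)
qed


lemma pari_Abs: "pari (Abs s) N a \<Longrightarrow> \<exists>t a'. N = Abs t \<and> pari s t a'"
  by (cases rule: pari.cases) auto

lemma pari_Var: "pari (Var i) N a \<Longrightarrow> N = Var i"
  by (cases rule: pari.cases) auto

lemma head_Abs_iff: "head (Abs s) t \<longleftrightarrow> (\<exists>s'. t = Abs s' \<and> head s s')"
  by (auto elim: head.cases intro: head.intros)

lemma headpow_Abs: "(head ^^ n) (Abs s) H \<Longrightarrow> \<exists>H0. H = Abs H0 \<and> (head ^^ n) s H0"
proof (induct n arbitrary: H)
  case 0 then show ?case by auto
next
  case (Suc n)
  from Suc.prems obtain y where "(head ^^ n) (Abs s) y" "head y H" by (auto elim: relpowp_Suc_E)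
  with Suc.hyps obtain y0 where "y = Abs y0" "(head ^^ n) s y0" by blast
  with \<open>head y H\<close> obtain H0 where "H = Abs H0" "head y0 H0" by (auto simp: head_Abs_iff)
  then show ?case using \<open>(head ^^ n) s y0\<close> by (auto intro: relpowp_Suc_I)
qed

lemma headpow_Abs_I: "(head ^^ n) s H \<Longrightarrow> (head ^^ n) (Abs s) (Abs H)"
proof (induct n arbitrary: H)
  case 0 then show ?case by auto
next
  case (Suc n)
  from Suc.prems obtain y where "(head ^^ n) s y" "head y H" by (auto elim: relpowp_Suc_E)
  then show ?case using Suc.hyps by (auto intro: relpowp_Suc_I head_abs)
qed

lemma head_det: "head M A \<Longrightarrow> head M B \<Longrightarrow> A = B"
proof (induct arbitrary: B rule: head.induct)
  case (head_redex s t)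
  from head_redex show ?case
  proof (cases rule: head.cases)
    case (head_app s1')
    then show ?thesis by blast
  qed simp
next
  case (head_app s s' t)
  from head_app.prems show ?case
  proof (cases rule: head.cases)
    case (head_redex s0)
    then show ?thesis using head_app(3) by blast
  next
    case (head_app s1')
    then show ?thesis using \<open>\<And>B. head s B \<Longrightarrow> s' = B\<close> by blast
  qed
next
  case (head_abs s s')
  from head_abs.prems obtain s'' where "B = Abs s''" "head s s''" unfolding head_Abs_iff by blast
  then show ?case using head_abs(2) by blast
qed

lemma var_app_no_head: "is_var_app M \<Longrightarrow> \<not> head M M'"
proof (induct M arbitrary: M')
  case (Var x) then show ?case by (auto elim: head.cases)
next
  case (App M1 M2)
  show ?case
  proof
    assume "head (App M1 M2) M'"
    then show False
    proof (cases rule: head.cases)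
      case (head_redex s0)
      then show ?thesis using App.prems by simp
    next
      case (head_app s1')
      then show ?thesis using App by simp
    qed
  qed
next
  case (Abs M) then show ?case by simp
qed

lemma hnf_no_head: "is_hnf M \<Longrightarrow> \<not> head M M'"
proof (induct M arbitrary: M')
  case (Abs M) then show ?case by (auto simp: head_Abs_iff)
next
  case (Var x) then show ?case using var_app_no_head[of "Var x"] by simp
next
  case (App a b) then show ?case using var_app_no_head[of "App a b"] by simp
qed

lemma hnf_unique:
  "(head ^^ k) M H \<Longrightarrow> is_hnf H \<Longrightarrow> (head ^^ k') M H' \<Longrightarrow> is_hnf H' \<Longrightarrow> k = k' \<and> H = H'"
proof (induct k arbitrary: M k')
  case 0
  then have "M = H" by auto
  show ?case
  proof (cases k')
    case 0 then show ?thesis using \<open>M = H\<close> "0.prems" by auto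
  next
    case (Suc m)
    with "0.prems"(3) obtain y where "head M y" using relpowp_Suc_D2 by metis
    then show ?thesis using "0.prems"(2) \<open>M = H\<close> hnf_no_head by blast
  qed
next
  case (Suc k)
  from Suc.prems(1) obtain M1 where M1: "head M M1" "(head ^^ k) M1 H" by (meson relpowp_Suc_D2)
  show ?case
  proof (cases k')
    case 0 then show ?thesis using Suc.prems M1 hnf_no_head by auto
  next
    case (Suc m)
    with Suc.prems(3) obtain M2 where M2: "head M M2" "(head ^^ m) M2 H'" by (meson relpowp_Suc_D2)
    with M1 head_det have "M1 = M2" by blast
    with Suc.hyps[OF M1(2) Suc.prems(2)] M2 Suc.prems(4) \<open>k' = Suc m\<close> show ?thesis by auto
  qed
qed

lemma hlen_hnf_eq: "(head ^^ k) M H \<Longrightarrow> is_hnf H \<Longrightarrow> hlen M = k \<and> hnf M = H"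
proof -
  assume a: "(head ^^ k) M H" "is_hnf H"
  have "hlen M = k" unfolding hlen_def
  proof (rule the_equality)
    show "\<exists>N. (head ^^ k) M N \<and> is_hnf N" using a by blast
    fix k' assume "\<exists>N. (head ^^ k') M N \<and> is_hnf N"
    then show "k' = k" using a hnf_unique by metis
  qed
  moreover have "hnf M = H" unfolding hnf_def
  proof (rule the_equality)
    show "\<exists>k. (head ^^ k) M H \<and> is_hnf H" using a by blast
    fix H' assume "\<exists>k. (head ^^ k) M H' \<and> is_hnf H'"
    then show "H' = H" using a hnf_unique by metis
  qed
  ultimately show ?thesis by simp
qed

lemma has_hnf_Abs: "has_hnf s \<Longrightarrow> has_hnf (Abs s)"
proof -
  assume "has_hnf s"
  then obtain k N where "(head ^^ k) s N" "is_hnf N" unfolding has_hnf_def by blast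
  then have "(head ^^ k) (Abs s) (Abs N)" "is_hnf (Abs N)" by (auto intro: headpow_Abs_I)
  then show ?thesis unfolding has_hnf_def by blast
qed

lemma has_hnf_back: "head\<^sup>*\<^sup>* M L \<Longrightarrow> has_hnf L \<Longrightarrow> has_hnf M"
proof -
  assume a: "head\<^sup>*\<^sup>* M L" "has_hnf L"
  then obtain n where n: "(head ^^ n) M L" unfolding rtranclp_power by blast
  from a obtain k N where "(head ^^ k) L N" "is_hnf N" unfolding has_hnf_def by blast
  with n have "(head ^^ (n + k)) M N" by (blast intro: relpowp_trans)
  with \<open>is_hnf N\<close> show ?thesis unfolding has_hnf_def by blast
qed

lemma hnf_has_hnf: "is_hnf M \<Longrightarrow> has_hnf M"
  unfolding has_hnf_def by (rule exI[of _ 0]) simp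

section \<open>Weak head reduction and internal parallel reduction\<close>

inductive wh :: "dB \<Rightarrow> dB \<Rightarrow> bool" where
  whr: "wh (App (Abs s) t) (subst s t 0)"
| wha: "wh s s' \<Longrightarrow> \<not> is_Abs s \<Longrightarrow> wh (App s t) (App s' t)"

lemma wh_not_Abs: "wh s t \<Longrightarrow> \<not> is_Abs s"
  by (induct rule: wh.induct) auto

lemma wh_head: "wh s t \<Longrightarrow> head s t"
proof (induct rule: wh.induct)
  case (whr s t) then show ?case by (rule head_redex)
next
  case (wha s s' t)
  then show ?case by (intro head_app) (auto)
qed

lemma whs_heads: "wh\<^sup>*\<^sup>* s t \<Longrightarrow> head\<^sup>*\<^sup>* s t"
  by (induct rule: rtranclp_induct) (auto dest: wh_head intro: rtranclp.rtrancl_into_rtrancl)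

lemma whs_app: "wh\<^sup>*\<^sup>* s L \<Longrightarrow> \<not> is_Abs s \<Longrightarrow> wh\<^sup>*\<^sup>* (App s u) (App L u)"
proof (induct rule: converse_rtranclp_induct)
  case base then show ?case by simp
next
  case (step s s1)
  have "wh (App s u) (App s1 u)" using step by (auto intro: wha)
  moreover have "wh\<^sup>*\<^sup>* (App s1 u) (App L u)"
  proof (cases "is_Abs s1")
    case True
    from step(2) have "s1 = L"
      by (cases rule: converse_rtranclpE) (use True wh_not_Abs in auto)
    then show ?thesis by simp
  next
    case False then show ?thesis using step by simp
  qed
  ultimately show ?case by (rule converse_rtranclp_into_rtranclp)
qed

inductive sp :: "dB \<Rightarrow> dB \<Rightarrow> bool" where
  spv: "sp (Var i) (Var i)"
| spr: "par s t \<Longrightarrow> par u v \<Longrightarrow> sp (App (Abs s) u) (App (Abs t) v)"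
| spa: "sp s t \<Longrightarrow> par u v \<Longrightarrow> sp (App s u) (App t v)"

definition wpar :: "dB \<Rightarrow> dB \<Rightarrow> bool" where
  "wpar L N \<longleftrightarrow> (\<exists>s t. L = Abs s \<and> N = Abs t \<and> par s t) \<or> sp L N"

lemma lemW: "pari M N a \<Longrightarrow> \<exists>L. wh\<^sup>*\<^sup>* M L \<and> wpar L N"
proof (induct a arbitrary: M N rule: less_induct)
  case (less a)
  from less.prems show ?case
  proof cases
    case (pv i) then show ?thesis by (auto simp: wpar_def intro: sp.intros)
  next
    case (pabs s t a') then show ?thesis by (auto simp: wpar_def par_def)
  next
    case (papp s t a1 u v b)
    show ?thesis
    proof (cases "is_Abs s")
      case True
      then obtain s0 where s0: "s = Abs s0" by (cases s) auto
      with papp have "pari (Abs s0) t a1" by simp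
      then obtain t0 a0 where "t = Abs t0" "pari s0 t0 a0" using pari_Abs by blast
      then have "sp M N" using papp s0 by (auto simp: par_def intro!: sp.spr)
      then show ?thesis by (auto simp: wpar_def)
    next
      case False
      have "a1 < a" using papp by simp
      from less(1)[OF this papp(4)] obtain L where L: "wh\<^sup>*\<^sup>* s L" "wpar L t" by blast
      then have "wh\<^sup>*\<^sup>* M (App L u)" using papp False whs_app by simp
      moreover have "sp (App L u) N"
      proof -
        have pu: "par u v" using papp by (auto simp: par_def)
        from L(2) show ?thesis unfolding wpar_def
        proof
          assume "\<exists>s t'. L = Abs s \<and> t = Abs t' \<and> par s t'"
          then obtain s1 t1 where "L = Abs s1" "t = Abs t1" "par s1 t1" by blast
          then show ?thesis using papp pu by (auto intro: sp.spr)
        next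
          assume "sp L t" then show ?thesis using papp pu by (auto intro: sp.spa)
        qed
      qed
      then have "wpar (App L u) N" by (simp add: wpar_def)
      ultimately show ?thesis by blast
    qed
  next
    case (pbeta s t a1 u v b)
    obtain c where c: "pari (subst s u 0) (subst t v 0) c" "c \<le> a1 + occ 0 t * b"
      using pari_subst[OF pbeta(4) pbeta(5)] by blast
    then have "c < a" using pbeta by simp
    from less(1)[OF this c(1)] obtain L where L: "wh\<^sup>*\<^sup>* (subst s u 0) L" "wpar L N"
      using pbeta by blast
    have "wh M (subst s u 0)" using pbeta by (simp add: whr)
    with L show ?thesis by (blast intro: converse_rtranclp_into_rtranclp)
  qed
qed

lemma sp_not_Abs: "sp L N \<Longrightarrow> \<not> is_Abs L \<and> \<not> is_Abs N"
  by (induct rule: sp.induct) auto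

lemma sp_var_app_hnf: "sp L N \<Longrightarrow> is_var_app L \<Longrightarrow> is_hnf L"
  by (cases L) (auto dest: sp_not_Abs)

lemma spstep: "sp L N \<Longrightarrow> \<not> is_var_app L \<Longrightarrow> \<exists>L' N'. head L L' \<and> head N N' \<and> par L' N'"
proof (induct rule: sp.induct)
  case (spv i) then show ?case by simp
next
  case (spr s t u v)
  then show ?case by (auto intro!: head_redex par_subst)
next
  case (spa s t u v)
  then obtain s' t' where st: "head s s'" "head t t'" "par s' t'" by auto
  have "\<forall>w. s \<noteq> Abs w" "\<forall>w. t \<noteq> Abs w" using sp_not_Abs[OF spa(1)] by auto
  with st have "head (App s u) (App s' u)" "head (App t v) (App t' v)" by (auto intro: head_app)
  moreover have "par (App s' u) (App t' v)" using st(3) spa(3) unfolding par_def by (blast intro: papp)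
  ultimately show ?case by blast
qed

lemma claimC: "(head ^^ n) N H \<Longrightarrow> is_hnf H \<Longrightarrow> par M N \<Longrightarrow> has_hnf M"
proof (induct n arbitrary: M N H rule: less_induct)
  case (less n)
  note IHn = less.hyps
  have "\<forall>M H. (head ^^ n) N H \<longrightarrow> is_hnf H \<longrightarrow> par M N \<longrightarrow> has_hnf M" for N
  proof (induct N rule: measure_induct_rule[of size])
    case (less N)
    show ?case
    proof (intro allI impI)
      fix M H assume hn: "(head ^^ n) N H" and hH: "is_hnf H" and pMN: "par M N"
      have absc: "has_hnf (Abs M0)" if "N = Abs N0" "par M0 N0" for M0 N0
      proof -
        from hn that obtain H0 where H0: "H = Abs H0" "(head ^^ n) N0 H0" using headpow_Abs by blast
        with hH have "is_hnf H0" by simp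
        have "size N0 < size N" using that by simp
        with less H0 \<open>is_hnf H0\<close> that have "has_hnf M0" by blast
        then show ?thesis by (rule has_hnf_Abs)
      qed
      show "has_hnf M"
      proof (cases "is_Abs M")
        case True
        then obtain M0 where M: "M = Abs M0" by (cases M) auto
        from pMN M obtain a where "pari (Abs M0) N a" by (auto simp: par_def)
        then obtain N0 a' where "N = Abs N0" "pari M0 N0 a'" using pari_Abs by blast
        then have "N = Abs N0" "par M0 N0" by (auto simp: par_def)
        then show ?thesis using absc M by simp
      next
        case False
        from pMN obtain a where "pari M N a" by (auto simp: par_def)
        from lemW[OF this] obtain L where wl: "wh\<^sup>*\<^sup>* M L" "wpar L N" by blast
        have hl: "head\<^sup>*\<^sup>* M L" using wl(1) by (rule whs_heads)
        have bk: "has_hnf L \<Longrightarrow> has_hnf M" using hl has_hnf_back by blast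
        from wl(2) show ?thesis unfolding wpar_def
        proof
          assume "\<exists>s t. L = Abs s \<and> N = Abs t \<and> par s t"
          then obtain s t where "L = Abs s" "N = Abs t" "par s t" by blast
          then show ?thesis using absc bk by simp
        next
          assume sLN: "sp L N"
          show ?thesis
          proof (cases "is_var_app L")
            case True
            then have "is_hnf L" using sLN sp_var_app_hnf by blast
            then show ?thesis using bk hnf_has_hnf by blast
          next
            case False
            from spstep[OF sLN False] obtain L' N' where LN: "head L L'" "head N N'" "par L' N'"
              by blast
            show ?thesis
            proof (cases n)
              case 0
              then have "N = H" using hn by auto
              then show ?thesis using hH LN(2) hnf_no_head by blast
            next
              case (Suc m)
              from hn Suc obtain N'' where "head N N''" "(head ^^ m) N'' H"
                by (meson relpowp_Suc_D2)
              with LN(2) head_det have "(head ^^ m) N' H" by metis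
              with IHn[of m] Suc hH LN(3) have "has_hnf L'" by blast
              then have "has_hnf L" using LN(1) has_hnf_back by blast
              then show ?thesis by (rule bk)
            qed
          qed
        qed
      qed
    qed
  qed
  then show ?case using less.prems by blast
qed


section \<open>Head reduction lengths do not increase\<close>

lemma pari_App_nonAbs: "pari (App s t) N a \<Longrightarrow> \<not> is_Abs s \<Longrightarrow> \<exists>u v. N = App u v \<and> par s u \<and> par t v"
  by (cases rule: pari.cases) (auto simp: par_def)

lemma pari_redex_inv: assumes "pari (App (Abs s) t) N a" shows
  "(\<exists>t0 v. N = App (Abs t0) v \<and> par s t0 \<and> par t v) \<or> (\<exists>t0 v. N = subst t0 v 0 \<and> par s t0 \<and> par t v)"
  using assms
proof (cases rule: pari.cases)
  case papp
  then obtain ta v x y where 1: "N = App ta v" "pari (Abs s) ta x" "pari t v y" by blast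
  then obtain t0 z where "ta = Abs t0" "pari s t0 z" using pari_Abs by blast
  then show ?thesis using 1 unfolding par_def by blast
next
  case pbeta
  then show ?thesis unfolding par_def by blast
qed

lemma var_app_hnf: "is_var_app H \<Longrightarrow> is_hnf H"
  by (cases H) auto

lemma head_par:
  "head M M' \<Longrightarrow> par M N \<Longrightarrow>
     par M' N \<or> (\<exists>N'. head N N' \<and> par M' N' \<and> (\<not> is_Abs M \<longrightarrow> \<not> is_Abs N))"
proof (induct arbitrary: N rule: head.induct)
  case (head_redex s t)
  from head_redex obtain a where "pari (App (Abs s) t) N a" by (auto simp: par_def)
  from pari_redex_inv[OF this] show ?case
  proof
    assume "\<exists>t0 v. N = App (Abs t0) v \<and> par s t0 \<and> par t v"
    then obtain t0 v where tv: "N = App (Abs t0) v" "par s t0" "par t v" by blast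
    then have "head N (subst t0 v 0)" "par (subst s t 0) (subst t0 v 0)"
      by (auto intro!: head.head_redex par_subst)
    then show ?thesis using tv by auto
  next
    assume "\<exists>t0 v. N = subst t0 v 0 \<and> par s t0 \<and> par t v"
    then obtain t0 v where tv: "N = subst t0 v 0" "par s t0" "par t v" by blast
    then have "par (subst s t 0) N" by (auto intro!: par_subst)
    then show ?thesis by simp
  qed
next
  case (head_app s s' t)
  have nA: "\<not> is_Abs s" using head_app(3) by (cases s) auto
  from head_app obtain a where "pari (App s t) N a" by (auto simp: par_def)
  from pari_App_nonAbs[OF this nA] obtain u v where uv: "N = App u v" "par s u" "par t v" by blast
  from head_app(2)[OF uv(2)] show ?case
  proof
    assume "par s' u"
    then have "par (App s' t) (App u v)" using uv(3) unfolding par_def by (blast intro: pari.papp)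
    then show ?thesis using uv by simp
  next
    assume "\<exists>N'. head u N' \<and> par s' N' \<and> (\<not> is_Abs s \<longrightarrow> \<not> is_Abs u)"
    then obtain u' where u': "head u u'" "par s' u'" "\<not> is_Abs s \<longrightarrow> \<not> is_Abs u" by blast
    with nA have "\<forall>w. u \<noteq> Abs w" by auto
    with u' have "head (App u v) (App u' v)" by (auto intro: head.head_app)
    moreover have "par (App s' t) (App u' v)" using u'(2) uv(3) unfolding par_def by (blast intro: pari.papp)
    ultimately show ?thesis using uv by auto
  qed
next
  case (head_abs s s')
  from head_abs obtain a where "pari (Abs s) N a" by (auto simp: par_def)
  then obtain u a' where u: "N = Abs u" "pari s u a'" using pari_Abs by blast
  then have "par s u" by (auto simp: par_def)
  from head_abs(2)[OF this] show ?case
  proof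
    assume "par s' u"
    then have "par (Abs s') (Abs u)" unfolding par_def by (blast intro: pari.pabs)
    then show ?thesis using u by simp
  next
    assume "\<exists>N'. head u N' \<and> par s' N' \<and> (\<not> is_Abs s \<longrightarrow> \<not> is_Abs u)"
    then obtain u' where "head u u'" "par s' u'" by blast
    then have "head (Abs u) (Abs u')" "par (Abs s') (Abs u')"
      unfolding par_def by (auto intro: head.head_abs pari.pabs)
    then show ?thesis using u by auto
  qed
qed

inductive sr :: "dB \<Rightarrow> dB \<Rightarrow> bool" where
  srv: "sr (Var i) (Var i)"
| srl: "sr s t \<Longrightarrow> sr (Abs s) (Abs t)"
| sra: "sr s t \<Longrightarrow> par\<^sup>*\<^sup>* u v \<Longrightarrow> sr (App s u) (App t v)"

lemma sr_refl: "sr t t"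
  by (induct t) (auto intro: sr.intros)

lemma sr_trans: "sr a b \<Longrightarrow> sr b c \<Longrightarrow> sr a c"
proof (induct arbitrary: c rule: sr.induct)
  case (srv i) then show ?case by simp
next
  case (srl s t)
  from srl.prems show ?case by (cases rule: sr.cases) (auto intro: sr.srl srl.hyps)
next
  case (sra s t u v)
  from sra.prems show ?case
    by (cases rule: sr.cases) (auto intro: sr.sra sra.hyps rtranclp_trans[OF sra.hyps(3)])
qed

lemma par_var_app: "par H H' \<Longrightarrow> is_var_app H \<Longrightarrow> is_var_app H' \<and> sr H H'"
proof (induct H arbitrary: H')
  case (Var i)
  then have "H' = Var i" using pari_Var by (auto simp: par_def)
  then show ?case by (auto intro: sr.intros)
next
  case (App s u)
  from App.prems obtain a where "pari (App s u) H' a" by (auto simp: par_def)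
  moreover have "\<not> is_Abs s" using App.prems by (cases s) auto
  ultimately obtain t v where tv: "H' = App t v" "par s t" "par u v" using pari_App_nonAbs by blast
  with App have "is_var_app t" "sr s t" by auto
  then show ?case using tv by (auto intro: sr.sra)
next
  case (Abs s) then show ?case by simp
qed

lemma par_hnf: "par H H' \<Longrightarrow> is_hnf H \<Longrightarrow> is_hnf H' \<and> sr H H'"
proof (induct H arbitrary: H')
  case (Abs s)
  from Abs.prems obtain a where "pari (Abs s) H' a" by (auto simp: par_def)
  then obtain t a' where "H' = Abs t" "pari s t a'" using pari_Abs by blast
  then show ?case using Abs by (auto simp: par_def intro: sr.srl)
next
  case (Var i) then show ?case using par_var_app[of "Var i"] var_app_hnf by simp
next
  case (App a b) then show ?case using par_var_app[of "App a b"] var_app_hnf by simp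
qed

lemma count_lemma:
  "(head ^^ k) M H \<Longrightarrow> is_hnf H \<Longrightarrow> par M N \<Longrightarrow> \<exists>k' H'. k' \<le> k \<and> (head ^^ k') N H' \<and> par H H'"
proof (induct k arbitrary: M N)
  case 0
  then show ?case by (auto intro!: exI[of _ 0])
next
  case (Suc k)
  from Suc.prems(1) obtain M1 where M1: "head M M1" "(head ^^ k) M1 H" by (meson relpowp_Suc_D2)
  from head_par[OF M1(1) Suc.prems(3)] show ?case
  proof
    assume "par M1 N"
    from Suc.hyps[OF M1(2) Suc.prems(2) this] show ?thesis using le_SucI by blast
  next
    assume "\<exists>N'. head N N' \<and> par M1 N' \<and> (\<not> is_Abs M \<longrightarrow> \<not> is_Abs N)"
    then obtain N' where "head N N'" "par M1 N'" by blast
    from Suc.hyps[OF M1(2) Suc.prems(2) this(2)] obtain k' H' where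
      "k' \<le> k" "(head ^^ k') N' H'" "par H H'" by blast
    then have "Suc k' \<le> Suc k" "(head ^^ Suc k') N H'"
      using relpowp_Suc_I2[of head, OF \<open>head N N'\<close>] by auto
    then show ?thesis using \<open>par H H'\<close> by blast
  qed
qed

lemma KP:
  assumes "par M N"
  shows "(has_hnf M \<longleftrightarrow> has_hnf N) \<and> (has_hnf M \<longrightarrow> hlen N \<le> hlen M \<and> sr (hnf M) (hnf N))"
proof -
  have 1: "has_hnf N \<Longrightarrow> has_hnf M" using assms claimC unfolding has_hnf_def by blast
  have 2: "has_hnf N \<and> hlen N \<le> hlen M \<and> sr (hnf M) (hnf N)" if "has_hnf M"
  proof -
    from that obtain k H where kH: "(head ^^ k) M H" "is_hnf H" unfolding has_hnf_def by blast
    from count_lemma[OF kH assms] obtain k' H' where kH': "k' \<le> k" "(head ^^ k') N H'" "par H H'"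
      by blast
    from par_hnf[OF kH'(3) kH(2)] have "is_hnf H'" "sr H H'" by auto
    from hlen_hnf_eq[OF kH] hlen_hnf_eq[OF kH'(2) \<open>is_hnf H'\<close>] kH'(1) \<open>sr H H'\<close>
    have "hlen N \<le> hlen M \<and> sr (hnf M) (hnf N)" by simp
    moreover have "has_hnf N" using kH'(2) \<open>is_hnf H'\<close> unfolding has_hnf_def by blast
    ultimately show ?thesis by simp
  qed
  from 1 2 show ?thesis by blast
qed

lemma KPs:
  assumes "par\<^sup>*\<^sup>* M N"
  shows "(has_hnf M \<longleftrightarrow> has_hnf N) \<and> (has_hnf M \<longrightarrow> hlen N \<le> hlen M \<and> sr (hnf M) (hnf N))"
  using assms
proof (induct rule: rtranclp_induct)
  case base then show ?case by (simp add: sr_refl)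
next
  case (step y z)
  from KP[OF step(2)] step(3) show ?case by (auto intro: sr_trans)
qed


declare bt_gen.ctr[simp del] bt_gen.disc[simp del] bt_gen.sel[simp del]

definition Gs :: "dB \<times> bool \<Rightarrow> dB" where "Gs x = (if snd x then hnf (fst x) else fst x)"
definition As :: "dB \<times> bool \<Rightarrow> nat option" where "As x = (if snd x then Some (hlen (fst x)) else None)"
definition Bs :: "dB \<times> bool \<Rightarrow> bool" where "Bs x \<longleftrightarrow> snd x \<and> \<not> has_hnf (fst x)"

lemma bt_gen_eq: "bt_gen x = (if Bs x then ABot else (case Gs x of Var i \<Rightarrow> AVar (As x) i
   | Abs s \<Rightarrow> ALam (As x) (bt_gen (s, False))
   | App s t \<Rightarrow> AApp (As x) (bt_gen (s, False)) (bt_gen (t, True))))"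
  apply (subst bt_gen.code)
  unfolding Gs_def[symmetric] As_def[symmetric] Bs_def[symmetric]
  by (cases "Gs x") auto

definition Rel :: "dB \<times> bool \<Rightarrow> dB \<times> bool \<Rightarrow> bool" where
  "Rel x y \<longleftrightarrow> snd x = snd y \<and> (if snd x then par\<^sup>*\<^sup>* (fst x) (fst y) else sr (fst x) (fst y))"

lemma Rel_props:
  assumes "Rel x y"
  shows "Bs x = Bs y \<and> (\<not> Bs x \<longrightarrow> sr (Gs x) (Gs y) \<and>
     ((As x = None \<and> As y = None) \<or> (\<exists>k1 k2. As x = Some k1 \<and> As y = Some k2 \<and> k2 \<le> k1)))"
proof (cases "snd x")
  case True
  then have "snd y" "par\<^sup>*\<^sup>* (fst x) (fst y)" using assms by (auto simp: Rel_def)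
  with KPs[OF this(2)] True show ?thesis by (auto simp: Bs_def Gs_def As_def)
next
  case False
  then have "\<not> snd y" "sr (fst x) (fst y)" using assms by (auto simp: Rel_def)
  with False show ?thesis by (auto simp: Bs_def Gs_def As_def)
qed

lemma sr_children: "sr g h \<Longrightarrow> (\<exists>i. g = Var i \<and> h = Var i) \<or>
   (\<exists>s t. g = Abs s \<and> h = Abs t \<and> Rel (s, False) (t, False)) \<or>
   (\<exists>s t u v. g = App s u \<and> h = App t v \<and> Rel (s, False) (t, False) \<and> Rel (u, True) (v, True))"
  by (cases rule: sr.cases) (auto simp: Rel_def)

lemma root_ann_bt: "root_ann (bt_gen x) = (if Bs x then None else As x)"
  by (subst bt_gen_eq) (cases "Gs x"; simp add: root_ann_def)

lemma sub_rel: "Rel x y \<Longrightarrow> (subtree_at (bt_gen x) p = None \<and> subtree_at (bt_gen y) p = None) \<or>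
   (\<exists>x' y'. Rel x' y' \<and> subtree_at (bt_gen x) p = Some (bt_gen x') \<and> subtree_at (bt_gen y) p = Some (bt_gen y'))"
proof (induct p arbitrary: x y)
  case Nil then show ?case by (metis subtree_at.simps(1))
next
  case (Cons i p)
  note P = Rel_props[OF Cons.prems]
  show ?case
  proof (cases "Bs x")
    case True
    then have e: "bt_gen x = ABot" "bt_gen y = ABot" using P bt_gen_eq[of x] bt_gen_eq[of y] by simp_all
    show ?thesis unfolding e by simp
  next
    case False
    with P have nB: "\<not> Bs y" and srG: "sr (Gs x) (Gs y)" by auto
    from sr_children[OF srG] show ?thesis
    proof (elim disjE exE conjE)
      fix j assume "Gs x = Var j" "Gs y = Var j"
      then have e: "bt_gen x = AVar (As x) j" "bt_gen y = AVar (As y) j"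
        using False nB bt_gen_eq[of x] bt_gen_eq[of y] by simp_all
      show ?thesis unfolding e by simp
    next
      fix s t assume st: "Gs x = Abs s" "Gs y = Abs t" "Rel (s, False) (t, False)"
      then have e: "bt_gen x = ALam (As x) (bt_gen (s, False))" "bt_gen y = ALam (As y) (bt_gen (t, False))"
        using False nB bt_gen_eq[of x] bt_gen_eq[of y] by simp_all
      show ?thesis
      proof (cases "i = 0")
        case True then show ?thesis unfolding e using Cons.hyps[OF st(3)] by simp
      next
        case False then show ?thesis unfolding e by simp
      qed
    next
      fix s t u v assume st: "Gs x = App s u" "Gs y = App t v" "Rel (s, False) (t, False)"
        "Rel (u, True) (v, True)"
      then have e: "bt_gen x = AApp (As x) (bt_gen (s, False)) (bt_gen (u, True))"
        "bt_gen y = AApp (As y) (bt_gen (t, False)) (bt_gen (v, True))"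
        using False nB bt_gen_eq[of x] bt_gen_eq[of y] by simp_all
      show ?thesis
      proof (cases "i = 1")
        case True then show ?thesis unfolding e using Cons.hyps[OF st(3)] by simp
      next
        case False
        show ?thesis
        proof (cases "i = 2")
          case True then show ?thesis unfolding e using Cons.hyps[OF st(4)] by simp
        next
          case False2: False then show ?thesis unfolding e using False by simp
        qed
      qed
    qed
  qed
qed

lemma erase_bt: "erase (bt_gen x) = (if Bs x then ABot else (case Gs x of Var i \<Rightarrow> AVar None i
   | Abs s \<Rightarrow> ALam None (erase (bt_gen (s, False)))
   | App s t \<Rightarrow> AApp None (erase (bt_gen (s, False))) (erase (bt_gen (t, True)))))"
  by (subst bt_gen_eq) (cases "Gs x"; simp add: erase_def)

lemma erase_rel:
  assumes "Rel x y"
  shows "erase (bt_gen x) = erase (bt_gen y)"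
proof -
  define R where "R a b \<longleftrightarrow> (\<exists>x y. Rel x y \<and> a = erase (bt_gen x) \<and> b = erase (bt_gen y))" for a b
  have "R (erase (bt_gen x)) (erase (bt_gen y))" using assms R_def by blast
  then show ?thesis
  proof (rule atree.coinduct[of R])
    fix a b assume "R a b"
    then obtain x y where xy: "Rel x y" "a = erase (bt_gen x)" "b = erase (bt_gen y)"
      unfolding R_def by blast
    note P = Rel_props[OF xy(1)]
    show "(a = ABot) = (b = ABot) \<and>
    is_AVar a = is_AVar b \<and>
    (is_AVar a \<longrightarrow> is_AVar b \<longrightarrow> un_AVar1 a = un_AVar1 b \<and> un_AVar2 a = un_AVar2 b) \<and>
    is_ALam a = is_ALam b \<and>
    (is_ALam a \<longrightarrow> is_ALam b \<longrightarrow> un_ALam1 a = un_ALam1 b \<and> R (un_ALam2 a) (un_ALam2 b)) \<and>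
    (is_AApp a \<longrightarrow> is_AApp b \<longrightarrow> un_AApp1 a = un_AApp1 b \<and>
       R (un_AApp2 a) (un_AApp2 b) \<and> R (un_AApp3 a) (un_AApp3 b))"
    proof (cases "Bs x")
      case True
      then have "a = ABot" "b = ABot" using P xy by (simp_all add: erase_bt)
      then show ?thesis by simp
    next
      case False
      with P have nB: "\<not> Bs y" and srG: "sr (Gs x) (Gs y)" by auto
      from sr_children[OF srG] show ?thesis
      proof (elim disjE exE conjE)
        fix j assume "Gs x = Var j" "Gs y = Var j"
        then have "a = AVar None j" "b = AVar None j" using False nB xy by (simp_all add: erase_bt)
        then show ?thesis by simp
      next
        fix s t assume st: "Gs x = Abs s" "Gs y = Abs t" "Rel (s, False) (t, False)"
        then have "a = ALam None (erase (bt_gen (s, False)))" "b = ALam None (erase (bt_gen (t, False)))"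
          using False nB xy by (simp_all add: erase_bt)
        moreover have "R (erase (bt_gen (s, False))) (erase (bt_gen (t, False)))"
          using st(3) unfolding R_def by blast
        ultimately show ?thesis by simp
      next
        fix s t u v assume st: "Gs x = App s u" "Gs y = App t v" "Rel (s, False) (t, False)"
          "Rel (u, True) (v, True)"
        then have "a = AApp None (erase (bt_gen (s, False))) (erase (bt_gen (u, True)))"
          "b = AApp None (erase (bt_gen (t, False))) (erase (bt_gen (v, True)))"
          using False nB xy by (simp_all add: erase_bt)
        moreover have "R (erase (bt_gen (s, False))) (erase (bt_gen (t, False)))"
          using st(3) unfolding R_def by blast
        moreover have "R (erase (bt_gen (u, True))) (erase (bt_gen (v, True)))"
          using st(4) unfolding R_def by blast
        ultimately show ?thesis by simp
      qed
    qed
  qed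
qed

theorem proposition4p5:
  fixes M N :: dB
  assumes "beta_star M N"
  shows "tree_ge (BTc M) (BTc N)"
proof -
  have "par\<^sup>*\<^sup>* M N" using assms
    by (induct rule: rtranclp_induct) (auto intro: rtranclp.rtrancl_into_rtrancl beta_par)
  then have R: "Rel (M, True) (N, True)" by (simp add: Rel_def)
  show ?thesis unfolding tree_ge_def BTc_def
  proof (intro conjI allI impI)
    show "erase (bt_gen (M, True)) = erase (bt_gen (N, True))" by (rule erase_rel[OF R])
  next
    fix p s1 s2
    assume a: "subtree_at (bt_gen (M, True)) p = Some s1" "subtree_at (bt_gen (N, True)) p = Some s2"
    with sub_rel[OF R, of p] obtain x' y' where r: "Rel x' y'" "s1 = bt_gen x'" "s2 = bt_gen y'" by auto
    from Rel_props[OF r(1)] show "root_ann s1 = None \<and> root_ann s2 = None \<or>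
       (\<exists>k1 k2. root_ann s1 = Some k1 \<and> root_ann s2 = Some k2 \<and> k2 \<le> k1)"
      using r by (auto simp: root_ann_bt)
  qed
qed

end
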